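(* Let $\alpha\in(0,1)$. (i) If $1<p<\frac n\alpha$ and $\frac1q=\frac1p-\frac\alpha n$, then for every $f$ with $\|f\|_{W^{\alpha,p}}<\infty$, \[ \|f\|_{GaRo_q}\le n^{\frac{n+\alpha p}{2p}}\|f\|_{W^{\alpha,p}}. \] (ii) If $p=\frac n\alpha$, then for every such $f$, \[ \|f\|_{GaRo_\infty}\le n^{\alpha}\|f\|_{W^{\alpha,\frac n\alpha}}. \]
   Context: $Q_0=(0,1)^n$; cubes are subcubes of $Q_0$ with sides parallel to the axes. $P$ is the set of countable families $\{Q_i\}_{i\in I}$ of subcubes of $Q_0$ with pairwise disjoint interiors. For measurable $f$ on $Q_0$, \[ \|f\|_{W^{\alpha,p}}=\Big\{\int_{Q_0}\int_{Q_0}\frac{|f(x)-f(y)|^p}{|x-y|^{n+\alpha p}}\,dx\,dy\Big\}^{1/p}. \] For $1<q\le\infty$ with $1/q+1/q'=1$ ($1/q'=1$ when $q=\infty$), \[ \|f\|_{GaRo_q}=\sup_{\{Q_i\}\in P}\frac{\sum_{i}\frac1{|Q_i|}\int_{Q_i}\int_{Q_i}|f(x)-f(y)|\,dx\,dy}{(\sum_i|Q_i|)^{1/q'}}. \] *)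

theory Defs
  imports "HOL-Analysis.Analysis"
begin

definition Q0 :: "(real ^ 'n) set" where
  "Q0 = box 0 One"

definition is_cube :: "(real ^ 'n) set \<Rightarrow> bool" where
  "is_cube Q \<longleftrightarrow> (\<exists>a r. r > 0 \<and> box a (a + r *\<^sub>R One) \<subseteq> Q \<and> Q \<subseteq> cbox a (a + r *\<^sub>R One))"

definition cube_families :: "(real ^ 'n) set set set" where
  "cube_families = {\<Q>. countable \<Q> \<and> (\<forall>Q\<in>\<Q>. is_cube Q \<and> Q \<subseteq> Q0)
                        \<and> pairwise (\<lambda>A B. interior A \<inter> interior B = {}) \<Q>}"

definition W_int :: "(real ^ 'n \<Rightarrow> real) \<Rightarrow> real \<Rightarrow> real \<Rightarrow> ennreal" where
  "W_int f \<alpha> p = (\<integral>\<^sup>+ x \<in> Q0. (\<integral>\<^sup>+ y \<in> Q0.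
       ennreal (\<bar>f x - f y\<bar> powr p / norm (x - y) powr (real CARD('n) + \<alpha> * p)) \<partial>lebesgue) \<partial>lebesgue)"

definition W_norm :: "(real ^ 'n \<Rightarrow> real) \<Rightarrow> real \<Rightarrow> real \<Rightarrow> ennreal" where
  "W_norm f \<alpha> p = (if W_int f \<alpha> p = \<infinity> then \<infinity> else ennreal (enn2real (W_int f \<alpha> p) powr (1 / p)))"

text \<open>Exponent 1/q' with 1/q + 1/q' = 1, and 1/q' = 1 for q = \<infinity>.\<close>
definition dual_exp :: "ereal \<Rightarrow> real" where
  "dual_exp q = (if q = \<infinity> then 1 else 1 - 1 / real_of_ereal q)"

definition GaRo_norm :: "(real ^ 'n \<Rightarrow> real) \<Rightarrow> ereal \<Rightarrow> ennreal" where
  "GaRo_norm f q = (SUP \<Q> \<in> cube_families.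
      (\<integral>\<^sup>+ Q. ((\<integral>\<^sup>+ x \<in> Q. (\<integral>\<^sup>+ y \<in> Q. ennreal \<bar>f x - f y\<bar> \<partial>lebesgue) \<partial>lebesgue)
                   / emeasure lebesgue Q) \<partial>count_space \<Q>)
      / ennreal ((enn2real (\<integral>\<^sup>+ Q. emeasure lebesgue Q \<partial>count_space \<Q>)) powr dual_exp q))"

end

theory Submission
  imports Defs
begin

interpretation lebesgue_sf: sigma_finite_measure "lebesgue :: ('a::euclidean_space) measure"
proof -
  obtain A :: "'a set set" where A: "countable A" "A \<subseteq> sets lborel" "\<Union>A = space lborel"
     "\<forall>a\<in>A. emeasure lborel a \<noteq> \<infinity>"
    using lborel.sigma_finite_countable by blast
  show "sigma_finite_measure (lebesgue :: 'a measure)"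
    unfolding sigma_finite_measure_def
    apply (rule exI[of _ A])
    using A by (auto simp: emeasure_completion subset_eq)
qed

lemma One_nth_cart[simp]: "(One :: real ^ 'n) $ i = 1"
proof -
  have "axis i (1::real) \<in> (Basis :: (real^'n) set)" by (simp add: cart_basis_def)
  then have "(One :: real ^ 'n) \<bullet> axis i 1 = 1" by (rule inner_sum_Basis)
  then show ?thesis by (simp add: inner_axis)
qed

lemma cube_facts:
  fixes Q :: "(real ^ 'n) set"
  assumes "is_cube Q"
  obtains a r where "r > 0" "box a (a + r *\<^sub>R One) \<subseteq> Q" "Q \<subseteq> cbox a (a + r *\<^sub>R One)"
    "Q \<in> sets lebesgue" "emeasure lebesgue Q = ennreal (r ^ CARD('n))"
    "interior Q = box a (a + r *\<^sub>R One)"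
    "Q - interior Q \<in> null_sets lebesgue"
    "\<And>x y. x \<in> Q \<Longrightarrow> y \<in> Q \<Longrightarrow> norm (x - y) \<le> sqrt (real CARD('n)) * r"
proof -
  obtain a r where r: "r > 0" and b1: "box a (a + r *\<^sub>R One) \<subseteq> Q" and b2: "Q \<subseteq> cbox a (a + r *\<^sub>R One)"
    using assms unfolding is_cube_def by blast
  let ?B = "box a (a + r *\<^sub>R One)" and ?C = "cbox a (a + r *\<^sub>R One)"
  have nullC: "?C - ?B \<in> null_sets lebesgue"
    by (rule null_sets_completionI) (rule null_sets_cbox_Diff_box)
  have QB: "Q - ?B \<in> null_sets lebesgue"
    by (rule null_sets_completion_subset[OF _ nullC]) (use b2 in auto)
  have Bs: "?B \<in> sets lebesgue" by simp
  have Qeq: "Q = ?B \<union> (Q - ?B)" using b1 by auto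
  have Qs: "Q \<in> sets lebesgue"
  proof -
    have "?B \<union> (Q - ?B) \<in> sets lebesgue" using QB Bs by (intro sets.Un) auto
    then show ?thesis using Qeq by simp
  qed
  have int: "interior Q = ?B"
  proof
    show "interior Q \<subseteq> ?B" using interior_mono[OF b2] by simp
    show "?B \<subseteq> interior Q" by (rule interior_maximal[OF b1]) (rule open_box)
  qed
  have mB: "emeasure lebesgue ?B = ennreal (r ^ CARD('n))"
  proof -
    have "emeasure lebesgue ?B = emeasure lborel ?B" by (simp add: emeasure_completion)
    also have "\<dots> = ennreal (\<Prod>b\<in>(Basis :: (real^'n) set). r)"
      using r by (simp add: emeasure_lborel_box_eq inner_add_left inner_diff_left)
    also have "\<dots> = ennreal (r ^ CARD('n))" by simp
    finally show ?thesis .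
  qed
  have mQ: "emeasure lebesgue Q = ennreal (r ^ CARD('n))"
  proof -
    have "emeasure lebesgue Q = emeasure lebesgue ?B"
      using emeasure_Un_null_set[OF Bs QB] Qeq by simp
    then show ?thesis using mB by simp
  qed
  have dist: "norm (x - y) \<le> sqrt (real CARD('n)) * r" if "x \<in> Q" "y \<in> Q" for x y
  proof -
    have xc: "x \<in> ?C" "y \<in> ?C" using that b2 by auto
    have comp: "\<bar>(x - y) $ i\<bar> \<le> r" for i
    proof -
      have e: "(a + r *\<^sub>R One) $ i = a $ i + r"
        by (simp only: vector_add_component vector_scaleR_component One_nth_cart) simp
      have "a $ i \<le> x $ i \<and> x $ i \<le> (a + r *\<^sub>R One) $ i" "a $ i \<le> y $ i \<and> y $ i \<le> (a + r *\<^sub>R One) $ i"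
        using xc unfolding mem_box_cart by blast+
      then have "a $ i \<le> x $ i" "x $ i \<le> a $ i + r" "a $ i \<le> y $ i" "y $ i \<le> a $ i + r"
        unfolding e by auto
      then show ?thesis by auto
    qed
    have "norm (x - y) ^ 2 = (\<Sum>i\<in>UNIV. ((x - y) $ i) ^ 2)"
      by (simp add: norm_vec_def L2_set_def real_sqrt_pow2 sum_nonneg)
    also have "\<dots> \<le> (\<Sum>i\<in>(UNIV::'n set). r ^ 2)"
      by (intro sum_mono) (metis abs_le_square_iff abs_of_pos comp r)
    also have "\<dots> = (sqrt (real CARD('n)) * r) ^ 2"
      by (simp add: power_mult_distrib)
    finally show ?thesis
      by (meson power2_le_imp_le r real_sqrt_ge_zero mult_nonneg_nonneg of_nat_0_le_iff less_imp_le)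
  qed
  show ?thesis
    apply (rule that[OF r b1 b2 Qs mQ int])
    using QB int apply simp
    using dist by blast
qed



lemma young_eps:
  fixes p a b eps :: real
  assumes p: "p > 1" and a: "a \<ge> 0" and b: "b \<ge> 0" and e: "eps > 0"
  shows "a * b \<le> eps * a powr p / p + eps powr (-(p/(p-1))/p) * b powr (p/(p-1)) / (p/(p-1))"
proof -
  let ?q = "p/(p-1)"
  have q: "?q > 1" "1/p + 1/?q = 1" using p by (auto simp: field_simps)
  have "a * b = (eps powr (1/p) * a) * (eps powr (-1/p) * b)"
    using e by (simp add: powr_minus_divide[symmetric] powr_add[symmetric] field_simps)
  also have "\<dots> \<le> (eps powr (1/p) * a) powr p / p + (eps powr (-1/p) * b) powr ?q / ?q"
    by (rule Youngs_inequality) (use p q a b in auto)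
  also have "(eps powr (1/p) * a) powr p = eps * a powr p"
    using e a p by (simp add: powr_mult powr_powr)
  also have "(eps powr (-1/p) * b) powr ?q = eps powr (-?q/p) * b powr ?q"
    using e b p by (simp add: powr_mult powr_powr)
  finally show ?thesis by simp
qed

lemma young_pw:
  fixes p eps m u d D k :: real
  assumes p: "p > 1" and e: "eps > 0" and m: "m > 0" and u: "u \<ge> 0" and d: "d \<ge> 0" "d \<le> D"
    and k: "k > 0" and d0: "d = 0 \<Longrightarrow> u = 0"
  shows "u \<le> m * (eps / p) * (u powr p / d powr (k * p))
             + m * (eps powr (-(p/(p-1))/p) * (D powr k / m) powr (p/(p-1)) / (p/(p-1)))"
    (is "_ \<le> ?A + m * ?B")
proof (cases "u = 0")
  case True
  have "?A \<ge> 0" using m e p by (intro mult_nonneg_nonneg divide_nonneg_nonneg) auto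
  moreover have "?B \<ge> 0" using p by (intro divide_nonneg_nonneg mult_nonneg_nonneg) auto
  ultimately have "0 \<le> ?A + m * ?B" using m by (intro add_nonneg_nonneg mult_nonneg_nonneg) (use p e in auto)
  then show ?thesis using True by simp
next
  case False
  then have dp: "d > 0" using d d0 by force
  have Dp: "D > 0" using dp d by linarith
  define a where "a = u / d powr k"
  define b where "b = D powr k / m"
  have a0: "a \<ge> 0" and b0: "b \<ge> 0" using u m unfolding a_def b_def by auto
  have "u / m = a * (d powr k / m)" using dp unfolding a_def by simp
  also have "\<dots> \<le> a * b" unfolding b_def
    using a0 m dp d k by (intro mult_left_mono divide_right_mono powr_mono2) auto
  also have "\<dots> \<le> eps * a powr p / p + ?B"
    unfolding b_def[symmetric] by (rule young_eps[OF p a0 b0 e])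
  also have "a powr p = u powr p / d powr (k * p)"
    unfolding a_def using dp u by (simp add: powr_divide powr_powr)
  finally have "u / m \<le> eps * (u powr p / d powr (k * p)) / p + ?B" by simp
  then have "u \<le> m * (eps * (u powr p / d powr (k * p)) / p + ?B)"
    using m by (simp add: divide_le_eq mult.commute)
  then show ?thesis by (simp add: algebra_simps)
qed

lemma opt_eps:
  fixes p X W T :: real
  assumes p: "p > 1" and W: "W \<ge> 0" and T: "T \<ge> 0"
    and H: "\<And>eps. eps > 0 \<Longrightarrow> X \<le> eps * W / p + eps powr (-(p/(p-1))/p) * T powr (p/(p-1)) / (p/(p-1))"
  shows "X \<le> W powr (1/p) * T"
proof -
  define q where "q = p/(p-1)"
  have q: "q > 1" "1/p + 1/q = 1" "q/p = 1/(p-1)" using p unfolding q_def by (auto simp: field_simps)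
  have H': "X \<le> eps * W / p + eps powr (-(q/p)) * T powr q / q" if "eps > 0" for eps
    using H[OF that] unfolding q_def by simp
  consider "W > 0" "T > 0" | "W = 0" | "T = 0" using W T by linarith
  then show ?thesis
  proof cases
    case 1
    define eps where "eps = W powr (1/p - 1) * T"
    have ep: "eps > 0" using 1 unfolding eps_def by simp
    have e1: "eps * W = W powr (1/p) * T"
    proof -
      have "W powr (1/p - 1) * W powr 1 = W powr (1/p - 1 + 1)" by (rule powr_add[symmetric])
      then have "W powr (1/p - 1) * W = W powr (1/p)" using 1 by simp
      then show ?thesis unfolding eps_def by (simp add: algebra_simps)
    qed
    have "eps powr (-(q/p)) = W powr ((1 - 1/p) * (q/p)) * T powr (-(q/p))"
    proof -
      have "-((1 / p - 1) * q / p) = (1 - 1 / p) * q / p" by (simp add: divide_simps algebra_simps)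
      then show ?thesis using 1 unfolding eps_def by (simp add: powr_mult powr_powr)
    qed
    also have "(1 - 1/p) * (q/p) = 1/p" using p unfolding q(3) by (simp add: field_simps)
    finally have "eps powr (-(q/p)) * T powr q = W powr (1/p) * (T powr (-(q/p)) * T powr q)" by simp
    also have "T powr (-(q/p)) * T powr q = T"
    proof -
      have "(p/(p-1))/p = 1/(p-1)" using p by simp
      moreover have "-(1/(p-1)) + p/(p-1) = 1" using p by (simp add: divide_simps)
      ultimately have "-(q/p) + q = 1" unfolding q_def by simp
      then show ?thesis using 1 by (simp add: powr_add[symmetric])
    qed
    finally have e2: "eps powr (-(q/p)) * T powr q = W powr (1/p) * T" .
    have "X \<le> eps * W / p + eps powr (-(q/p)) * T powr q / q" by (rule H'[OF ep])
    also have "\<dots> = W powr (1/p) * T * (1/p + 1/q)" using e1 e2 by (simp add: field_simps)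
    finally show ?thesis using q(2) by simp
  next
    case 2
    have "X \<le> del" if "del > 0" for del
    proof (cases "T = 0")
      case True
      then show ?thesis using H'[of 1] 2 q that by simp
    next
      case False
      then have Tp: "T > 0" using T by simp
      define eps where "eps = (T powr q / (q * del)) powr (p/q)"
      have ep: "eps > 0" using Tp that q unfolding eps_def by simp
      have "eps powr (-(q/p)) = (T powr q / (q * del)) powr (p/q * (-(q/p)))"
        unfolding eps_def by (rule powr_powr)
      also have "p/q * (-(q/p)) = -1" using p q(1) by (simp add: field_simps)
      finally have "eps powr (-(q/p)) = (T powr q / (q * del)) powr (-1)" .
      also have "\<dots> = q * del / T powr q" using Tp that q by (simp add: powr_minus_divide)
      finally have "eps powr (-(q/p)) * T powr q / q = del" using Tp q by simp
      then show ?thesis using H'[OF ep] 2 by simp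
    qed
    then have "X \<le> 0" by (meson dense not_le)
    then show ?thesis using 2 by simp
  next
    case 3
    have "X \<le> del" if "del > 0" for del
    proof (cases "W = 0")
      case True
      then show ?thesis using H'[of 1] 3 q that p by simp
    next
      case False
      then have Wp: "W > 0" using W by simp
      define eps where "eps = del * p / W"
      have ep: "eps > 0" using Wp that p unfolding eps_def by simp
      have "eps * W / p = del" unfolding eps_def using Wp p by simp
      then show ?thesis using H'[OF ep] 3 q by simp
    qed
    then have "X \<le> 0" by (meson dense not_le)
    then show ?thesis using 3 by simp
  qed
qed



lemma id_lebesgue_borel[measurable]: "(\<lambda>x. x) \<in> measurable (lebesgue :: ('a::euclidean_space) measure) borel"
  by (rule measurable_completion) simp

lemma meas_G:
  fixes g :: "'a::euclidean_space \<Rightarrow> real"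
  assumes [measurable]: "g \<in> borel_measurable lebesgue" and [measurable]: "A \<in> sets lebesgue"
  shows "(\<lambda>(x,y). ennreal (\<bar>g x - g y\<bar> powr p / norm (x - y) powr c) * indicator A y)
     \<in> borel_measurable (lebesgue \<Otimes>\<^sub>M lebesgue)"
proof -
  have [measurable]: "(\<lambda>z. fst z - snd z) \<in> borel_measurable (lebesgue \<Otimes>\<^sub>M (lebesgue :: 'a measure))"
    by measurable
  show ?thesis by measurable
qed


lemma exp_ident:
  fixes n p \<alpha> :: real
  assumes p: "p > 1" and n: "n \<ge> 1"
  shows "2 * n + ((n + \<alpha> * p) / p - n) * (p / (p - 1)) = n * ((p / (p - 1)) * (1 - 1/p + \<alpha> / n))"
  using p n by (simp add: field_simps)

lemma m_ident:
  fixes r n p \<alpha> eps :: real and N :: nat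
  assumes r: "r > 0" and p: "p > 1" and n: "n = real N" "n \<ge> 1"
  shows "r ^ N * r ^ N * (eps powr (-(p/(p-1))/p) * ((sqrt n * r) powr ((n + \<alpha> * p) / p) / r ^ N) powr (p/(p-1)) / (p/(p-1)))
    = eps powr (-(p/(p-1))/p) * (n powr ((n + \<alpha> * p) / (2 * p))) powr (p/(p-1)) / (p/(p-1))
       * (r ^ N) powr ((p/(p-1)) * (1 - 1/p + \<alpha>/n))"
proof -
  define q where "q = p/(p-1)"
  define k where "k = (n + \<alpha> * p) / p"
  define C where "C = n powr ((n + \<alpha> * p) / (2 * p))"
  have rN: "r ^ N = r powr n" using r n by (simp add: powr_realpow)
  have "(sqrt n * r) powr k = C * r powr k"
    unfolding C_def k_def using n r
    by (simp add: powr_mult powr_half_sqrt[symmetric] powr_powr)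
  then have "(sqrt n * r) powr k / r ^ N = C * r powr (k - n)"
    using r by (simp add: rN powr_diff)
  then have "((sqrt n * r) powr k / r ^ N) powr q = C powr q * r powr ((k - n) * q)"
    using r by (simp add: powr_mult powr_powr C_def)
  moreover have "r ^ N * r ^ N = r powr (2 * n)"
    using r by (simp add: rN powr_add[symmetric])
  moreover have "(r ^ N) powr (q * (1 - 1/p + \<alpha>/n)) = r powr (n * (q * (1 - 1/p + \<alpha>/n)))"
    using r by (simp add: rN powr_powr)
  moreover have "2 * n + (k - n) * q = n * (q * (1 - 1/p + \<alpha>/n))"
    unfolding k_def q_def by (rule exp_ident[OF p n(2)])
  ultimately have "r ^ N * r ^ N * ((sqrt n * r) powr k / r ^ N) powr q = C powr q * (r ^ N) powr (q * (1 - 1/p + \<alpha>/n))"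
    by (simp add: powr_add[symmetric] mult_ac)
  then show ?thesis unfolding q_def[symmetric] k_def[symmetric] C_def[symmetric]
    by (simp add: algebra_simps)
qed


lemma cube_young:
  fixes g :: "real ^ 'n \<Rightarrow> real" and Q :: "(real ^ 'n) set"
  assumes gm[measurable]: "g \<in> borel_measurable lebesgue" and Q: "is_cube Q"
    and p: "p > 1" and e: "eps > 0" and al: "\<alpha> > 0"
  defines "n \<equiv> real CARD('n)"
  defines "q \<equiv> p / (p - 1)"
  shows "(\<integral>\<^sup>+x\<in>Q. (\<integral>\<^sup>+y\<in>Q. ennreal \<bar>g x - g y\<bar> \<partial>lebesgue) \<partial>lebesgue) / emeasure lebesgue Q
    \<le> ennreal (eps / p) * (\<integral>\<^sup>+x\<in>Q. (\<integral>\<^sup>+y\<in>Q.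
             ennreal (\<bar>g x - g y\<bar> powr p / norm (x - y) powr (n + \<alpha> * p)) \<partial>lebesgue) \<partial>lebesgue)
      + ennreal (eps powr (-q/p) * (n powr ((n + \<alpha> * p) / (2 * p))) powr q / q
           * enn2real (emeasure lebesgue Q) powr (q * (1 - 1/p + \<alpha>/n)))"
proof -
  obtain a r where r: "r > 0" and Qs[measurable]: "Q \<in> sets lebesgue"
    and mQ: "emeasure lebesgue Q = ennreal (r ^ CARD('n))"
    and dist: "\<And>x y. x \<in> Q \<Longrightarrow> y \<in> Q \<Longrightarrow> norm (x - y) \<le> sqrt n * r"
    using cube_facts[OF Q] unfolding n_def by metis
  define m where "m = r ^ CARD('n)"
  have m: "m > 0" using r unfolding m_def by simp
  define k where "k = (n + \<alpha> * p) / p"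
  have n1: "n \<ge> 1" unfolding n_def by simp
  have k: "k > 0" unfolding k_def using p al n1 by (intro divide_pos_pos) (auto intro: add_pos_pos)
  have kp: "k * p = n + \<alpha> * p" unfolding k_def using p by simp
  define D where "D = sqrt n * r"
  define B where "B = eps powr (-(p/(p-1))/p) * (D powr k / m) powr (p/(p-1)) / (p/(p-1))"
  have B0: "B \<ge> 0" unfolding B_def using p by (intro divide_nonneg_nonneg mult_nonneg_nonneg) auto
  define G where "G x y = ennreal (\<bar>g x - g y\<bar> powr p / norm (x - y) powr (n + \<alpha> * p))" for x y
  have Gm[measurable]: "(\<lambda>(x,y). G x y * indicator Q y) \<in> borel_measurable (lebesgue \<Otimes>\<^sub>M lebesgue)"
    unfolding G_def by (rule meas_G) (use gm Qs in auto)
  define a' where "a' = m * (eps / p)"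
  have a'0: "a' \<ge> 0" unfolding a'_def using m e p by simp
  have pw: "ennreal \<bar>g x - g y\<bar> \<le> ennreal a' * G x y + ennreal (m * B)" if "x \<in> Q" "y \<in> Q" for x y
  proof -
    have "\<bar>g x - g y\<bar> \<le> a' * (\<bar>g x - g y\<bar> powr p / norm (x - y) powr (k * p)) + m * B"
      unfolding a'_def B_def
      by (rule young_pw[OF p e m]) (use dist[OF that] k in \<open>auto simp: D_def\<close>)
    then have "ennreal \<bar>g x - g y\<bar> \<le> ennreal (a' * (\<bar>g x - g y\<bar> powr p / norm (x - y) powr (k * p)) + m * B)"
      by (rule ennreal_leI)
    also have "\<dots> = ennreal a' * G x y + ennreal (m * B)"
      unfolding G_def kp using a'0 m B0
      by (simp add: ennreal_plus[symmetric] ennreal_mult[symmetric] del: ennreal_plus)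
    finally show ?thesis .
  qed
  have inner: "(\<integral>\<^sup>+y\<in>Q. ennreal \<bar>g x - g y\<bar> \<partial>lebesgue)
      \<le> ennreal a' * (\<integral>\<^sup>+y\<in>Q. G x y \<partial>lebesgue) + ennreal (m * B) * ennreal m" if "x \<in> Q" for x
  proof -
    have "(\<integral>\<^sup>+y\<in>Q. ennreal \<bar>g x - g y\<bar> \<partial>lebesgue) \<le> (\<integral>\<^sup>+y. ennreal a' * (G x y * indicator Q y) + ennreal (m * B) * indicator Q y \<partial>lebesgue)"
      by (intro nn_integral_mono) (auto simp: pw[OF that] split: split_indicator)
    also have "\<dots> = ennreal a' * (\<integral>\<^sup>+y\<in>Q. G x y \<partial>lebesgue) + ennreal (m * B) * emeasure lebesgue Q"
      unfolding G_def by (subst nn_integral_add) (auto simp: nn_integral_cmult)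
    finally show ?thesis using mQ m_def by simp
  qed
  define Gi where "Gi x = (\<integral>\<^sup>+y\<in>Q. G x y \<partial>lebesgue)" for x
  have Gim[measurable]: "Gi \<in> borel_measurable lebesgue"
    unfolding Gi_def using Gm by (rule lebesgue_sf.borel_measurable_nn_integral[where f="\<lambda>x y. G x y * indicator Q y", simplified])
  have outer: "(\<integral>\<^sup>+x\<in>Q. (\<integral>\<^sup>+y\<in>Q. ennreal \<bar>g x - g y\<bar> \<partial>lebesgue) \<partial>lebesgue)
      \<le> ennreal a' * (\<integral>\<^sup>+x\<in>Q. Gi x \<partial>lebesgue) + ennreal (m * B) * ennreal m * ennreal m"
  proof -
    have "(\<integral>\<^sup>+x\<in>Q. (\<integral>\<^sup>+y\<in>Q. ennreal \<bar>g x - g y\<bar> \<partial>lebesgue) \<partial>lebesgue)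
        \<le> (\<integral>\<^sup>+x. ennreal a' * (Gi x * indicator Q x) + (ennreal (m * B) * ennreal m) * indicator Q x \<partial>lebesgue)"
      by (intro nn_integral_mono) (auto simp: inner Gi_def split: split_indicator)
    also have "\<dots> = ennreal a' * (\<integral>\<^sup>+x\<in>Q. Gi x \<partial>lebesgue) + ennreal (m * B) * ennreal m * emeasure lebesgue Q"
      by (subst nn_integral_add) (auto simp: nn_integral_cmult)
    finally show ?thesis using mQ m_def by simp
  qed
  have em: "enn2real (emeasure lebesgue Q) = m" using mQ m m_def by simp
  have ident: "m * m * B = eps powr (-q/p) * (n powr ((n + \<alpha> * p) / (2 * p))) powr q / q
           * m powr (q * (1 - 1/p + \<alpha>/n))"
    unfolding B_def D_def k_def m_def q_def
    by (rule m_ident[OF r p _ ]) (auto simp: n_def)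
  have A: "(\<integral>\<^sup>+x\<in>Q. Gi x \<partial>lebesgue) = (\<integral>\<^sup>+x\<in>Q. (\<integral>\<^sup>+y\<in>Q.
             ennreal (\<bar>g x - g y\<bar> powr p / norm (x - y) powr (n + \<alpha> * p)) \<partial>lebesgue) \<partial>lebesgue)"
    unfolding Gi_def G_def ..
  have "ennreal a' * (\<integral>\<^sup>+x\<in>Q. Gi x \<partial>lebesgue) + ennreal (m * B) * ennreal m * ennreal m
      = ennreal m * (ennreal (eps / p) * (\<integral>\<^sup>+x\<in>Q. Gi x \<partial>lebesgue) + ennreal (m * m * B))"
  proof -
    have "ennreal a' = ennreal m * ennreal (eps / p)" unfolding a'_def using m e p by (subst ennreal_mult[symmetric]) auto
    moreover have "ennreal (m * B) * ennreal m * ennreal m = ennreal m * ennreal (m * m * B)"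
      using m B0 by (simp add: ennreal_mult[symmetric] mult_ac)
    ultimately show ?thesis by (simp add: distrib_left mult_ac)
  qed
  then have "(\<integral>\<^sup>+x\<in>Q. (\<integral>\<^sup>+y\<in>Q. ennreal \<bar>g x - g y\<bar> \<partial>lebesgue) \<partial>lebesgue)
      \<le> emeasure lebesgue Q * (ennreal (eps / p) * (\<integral>\<^sup>+x\<in>Q. Gi x \<partial>lebesgue) + ennreal (m * m * B))"
    using outer mQ m_def by simp
  then have "(\<integral>\<^sup>+x\<in>Q. (\<integral>\<^sup>+y\<in>Q. ennreal \<bar>g x - g y\<bar> \<partial>lebesgue) \<partial>lebesgue) / emeasure lebesgue Q
      \<le> ennreal (eps / p) * (\<integral>\<^sup>+x\<in>Q. Gi x \<partial>lebesgue) + ennreal (m * m * B)"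
    by (intro divide_le_posI_ennreal) (use mQ m m_def in auto)
  then show ?thesis unfolding A ident em .
qed



lemma family_sum_le:
  fixes \<phi> :: "real ^ 'n \<Rightarrow> ennreal" and \<F> :: "(real ^ 'n) set set"
  assumes F: "\<F> \<in> cube_families" and phim[measurable]: "\<phi> \<in> borel_measurable lebesgue"
  shows "(\<integral>\<^sup>+Q. (\<integral>\<^sup>+x\<in>Q. \<phi> x \<partial>lebesgue) \<partial>count_space \<F>) \<le> (\<integral>\<^sup>+x\<in>Q0. \<phi> x \<partial>lebesgue)"
proof -
  have cnt: "countable \<F>" and cub: "\<And>Q. Q \<in> \<F> \<Longrightarrow> is_cube Q" and sub: "\<And>Q. Q \<in> \<F> \<Longrightarrow> Q \<subseteq> Q0"
    and disj: "pairwise (\<lambda>A B. interior A \<inter> interior B = {}) \<F>"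
    using F unfolding cube_families_def by auto
  have intm[measurable]: "interior Q \<in> sets lebesgue" for Q :: "(real ^ 'n) set"
    by (rule sets_completionI_sets) (simp add: borel_open)
  have eq: "(\<integral>\<^sup>+x\<in>Q. \<phi> x \<partial>lebesgue) = (\<integral>\<^sup>+x. \<phi> x * indicator (interior Q) x \<partial>lebesgue)" if QF: "Q \<in> \<F>" for Q
  proof -
    obtain a r where "Q \<in> sets lebesgue" "Q - interior Q \<in> null_sets lebesgue"
      using cube_facts[OF cub[OF QF]] by metis
    moreover have "(Q - interior Q) \<union> (interior Q - Q) = Q - interior Q" using interior_subset by blast
    ultimately show ?thesis
      by (intro nn_integral_null_delta) auto
  qed
  have "(\<integral>\<^sup>+Q. (\<integral>\<^sup>+x\<in>Q. \<phi> x \<partial>lebesgue) \<partial>count_space \<F>)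
      = (\<integral>\<^sup>+Q. (\<integral>\<^sup>+x. \<phi> x * indicator (interior Q) x \<partial>lebesgue) \<partial>count_space \<F>)"
    by (rule nn_integral_cong) (rule eq, simp)
  also have "\<dots> = (\<integral>\<^sup>+x. (\<integral>\<^sup>+Q. \<phi> x * indicator (interior Q) x \<partial>count_space \<F>) \<partial>lebesgue)"
    by (rule nn_integral_count_space_nn_integral[symmetric]) (use cnt in auto)
  also have "\<dots> \<le> (\<integral>\<^sup>+x\<in>Q0. \<phi> x \<partial>lebesgue)"
  proof (intro nn_integral_mono)
    fix x
    have "(\<integral>\<^sup>+Q. \<phi> x * indicator (interior Q) x \<partial>count_space \<F>)
        = (\<integral>\<^sup>+Q. \<phi> x * indicator {Q\<in>\<F>. x \<in> interior Q} Q \<partial>count_space \<F>)"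
      by (intro nn_integral_cong) (auto split: split_indicator)
    also have "\<dots> = \<phi> x * emeasure (count_space \<F>) {Q\<in>\<F>. x \<in> interior Q}"
      by (rule nn_integral_cmult_indicator) auto
    also have "\<dots> \<le> \<phi> x * indicator Q0 x"
    proof (cases "{Q\<in>\<F>. x \<in> interior Q} = {}")
      case True
      then show ?thesis by (simp only:) simp
    next
      case False
      then obtain Q1 where Q1: "Q1 \<in> \<F>" "x \<in> interior Q1" by blast
      have "{Q\<in>\<F>. x \<in> interior Q} = {Q1}"
        using Q1 disj unfolding pairwise_def by blast
      moreover have "x \<in> Q0" using Q1 sub interior_subset by blast
      ultimately show ?thesis using Q1 by simp
    qed
    finally show "(\<integral>\<^sup>+Q. \<phi> x * indicator (interior Q) x \<partial>count_space \<F>) \<le> \<phi> x * indicator Q0 x" .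
  qed
  finally show ?thesis .
qed



lemma emeasure_Q0: "emeasure lebesgue (Q0 :: (real ^ 'n) set) = 1"
proof -
  have "emeasure lebesgue (Q0 :: (real ^ 'n) set) = emeasure lborel (box 0 (One :: real ^ 'n))"
    unfolding Q0_def by (simp add: emeasure_completion)
  also have "\<dots> = 1" by (simp add: emeasure_lborel_box_eq)
  finally show ?thesis .
qed

lemma main_bound:
  fixes g :: "real ^ 'n \<Rightarrow> real" and \<F> :: "(real ^ 'n) set set"
  assumes gm[measurable]: "g \<in> borel_measurable lebesgue" and p: "p > 1" and al: "\<alpha> > 0"
    and W: "W_int g \<alpha> p \<noteq> \<infinity>" and F: "\<F> \<in> cube_families"
  defines "n \<equiv> real CARD('n)"
  defines "e \<equiv> 1 - 1/p + \<alpha>/n"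
  shows "(\<integral>\<^sup>+ Q. ((\<integral>\<^sup>+ x \<in> Q. (\<integral>\<^sup>+ y \<in> Q. ennreal \<bar>g x - g y\<bar> \<partial>lebesgue) \<partial>lebesgue)
                   / emeasure lebesgue Q) \<partial>count_space \<F>)
      / ennreal ((enn2real (\<integral>\<^sup>+ Q. emeasure lebesgue Q \<partial>count_space \<F>)) powr e)
    \<le> ennreal (n powr ((n + \<alpha> * p) / (2 * p))) * ennreal ((enn2real (W_int g \<alpha> p)) powr (1/p))"
proof (cases "\<F> = {}")
  case True
  then show ?thesis by (simp add: nn_integral_count_space_finite)
next
  case False
  then obtain Q1 where Q1: "Q1 \<in> \<F>" by blast
  have cnt: "countable \<F>" and cub: "\<And>Q. Q \<in> \<F> \<Longrightarrow> is_cube Q" and sub: "\<And>Q. Q \<in> \<F> \<Longrightarrow> Q \<subseteq> Q0"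
    using F unfolding cube_families_def by auto
  have Qs: "Q \<in> sets lebesgue" if "Q \<in> \<F>" for Q
    using cube_facts[OF cub[OF that]] by metis
  have mpos: "0 < emeasure lebesgue Q \<and> emeasure lebesgue Q < top"
    if QF: "Q \<in> \<F>" for Q
  proof -
    obtain a r where "r > 0" "emeasure lebesgue Q = ennreal (r ^ CARD('n))"
      using cube_facts[OF cub[OF QF]] by metis
    then show ?thesis by simp
  qed
  define S where "S = (\<integral>\<^sup>+ Q. emeasure lebesgue Q \<partial>count_space \<F>)"
  have S1: "S \<le> 1"
  proof -
    have "S = (\<integral>\<^sup>+Q. (\<integral>\<^sup>+x\<in>Q. 1 \<partial>lebesgue) \<partial>count_space \<F>)"
      unfolding S_def by (rule nn_integral_cong) (simp add: Qs)
    also have "\<dots> \<le> (\<integral>\<^sup>+x\<in>(Q0 :: (real ^ 'n) set). 1 \<partial>lebesgue)"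
      using family_sum_le[OF F, of "\<lambda>_. 1"] by simp
    also have "\<dots> = 1" by (simp add: emeasure_Q0 Q0_def)
    finally show ?thesis .
  qed
  have Sge: "emeasure lebesgue Q \<le> S" if "Q \<in> \<F>" for Q
  proof -
    have "emeasure lebesgue Q = (\<integral>\<^sup>+ Q'. emeasure lebesgue Q * indicator {Q} Q' \<partial>count_space \<F>)"
      using that by (subst nn_integral_cmult_indicator) auto
    also have "\<dots> \<le> S" unfolding S_def
      by (intro nn_integral_mono) (auto split: split_indicator)
    finally show ?thesis .
  qed
  define Sr where "Sr = enn2real S"
  have SSr: "S = ennreal Sr" and Srpos: "Sr > 0" and Sr1: "Sr \<le> 1"
  proof -
    have "S < top" using S1 ennreal_one_less_top by (rule le_less_trans)
    then show SE: "S = ennreal Sr" unfolding Sr_def by simp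
    show "Sr \<le> 1" using S1 unfolding SE by simp
    have "0 < emeasure lebesgue Q1" using mpos[OF Q1] by (rule conjunct1)
    then have "0 < S" using Sge[OF Q1] by (rule less_le_trans)
    then show "Sr > 0" unfolding SE by simp
  qed
  define q where "q = p / (p - 1)"
  define s where "s = q * e"
  define C where "C = n powr ((n + \<alpha> * p) / (2 * p))"
  have n1: "n \<ge> 1" unfolding n_def by simp
  have q1: "q > 1" unfolding q_def using p by (simp add: field_simps)
  have s1: "s \<ge> 1"
  proof -
    have "s = 1 + q * \<alpha> / n" unfolding s_def e_def q_def using p n1 by (simp add: field_simps)
    moreover have "q * \<alpha> / n \<ge> 0" using q1 al n1 by simp
    ultimately show ?thesis by linarith
  qed
  have C0: "C \<ge> 0" unfolding C_def by simp
  define m where "m Q = enn2real (emeasure lebesgue Q)" for Q :: "(real ^ 'n) set"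
  define G where "G x y = ennreal (\<bar>g x - g y\<bar> powr p / norm (x - y) powr (n + \<alpha> * p))" for x y :: "real ^ 'n"
  define A where "A Q = (\<integral>\<^sup>+x\<in>Q. (\<integral>\<^sup>+y\<in>Q. G x y \<partial>lebesgue) \<partial>lebesgue)" for Q :: "(real ^ 'n) set"
  define I where "I Q = (\<integral>\<^sup>+ x \<in> Q. (\<integral>\<^sup>+ y \<in> Q. ennreal \<bar>g x - g y\<bar> \<partial>lebesgue) \<partial>lebesgue)" for Q :: "(real ^ 'n) set"
  define Wr where "Wr = enn2real (W_int g \<alpha> p)"
  have WWr: "W_int g \<alpha> p = ennreal Wr" "Wr \<ge> 0" unfolding Wr_def using W by (auto simp: less_top)
  have Wdef: "W_int g \<alpha> p = (\<integral>\<^sup>+x\<in>Q0. (\<integral>\<^sup>+y\<in>Q0. G x y \<partial>lebesgue) \<partial>lebesgue)"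
    unfolding W_int_def G_def n_def ..
  have SA: "(\<integral>\<^sup>+Q. A Q \<partial>count_space \<F>) \<le> ennreal Wr"
  proof -
    define h where "h x = (\<integral>\<^sup>+y. G x y * indicator Q0 y \<partial>lebesgue)" for x
    have Q0s: "(Q0 :: (real ^ 'n) set) \<in> sets lebesgue" unfolding Q0_def by simp
    have [measurable]: "h \<in> borel_measurable lebesgue"
      unfolding h_def G_def
      by (rule lebesgue_sf.borel_measurable_nn_integral[where f="\<lambda>x y. _ x y * indicator Q0 y", OF meas_G[OF gm Q0s]])
    have "(\<integral>\<^sup>+Q. A Q \<partial>count_space \<F>) \<le> (\<integral>\<^sup>+Q. (\<integral>\<^sup>+x\<in>Q. h x \<partial>lebesgue) \<partial>count_space \<F>)"
    proof (intro nn_integral_mono)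
      fix Q assume "Q \<in> space (count_space \<F>)"
      then have "Q \<subseteq> Q0" using sub by simp
      then show "A Q \<le> (\<integral>\<^sup>+x\<in>Q. h x \<partial>lebesgue)"
        unfolding A_def h_def
        by (intro nn_integral_mono mult_right_mono) (auto split: split_indicator)
    qed
    also have "\<dots> \<le> (\<integral>\<^sup>+x\<in>Q0. h x \<partial>lebesgue)"
      by (rule family_sum_le[OF F]) simp
    also have "\<dots> = ennreal Wr" using WWr(1) Wdef unfolding h_def by simp
    finally show ?thesis .
  qed
  have mQ: "emeasure lebesgue Q = ennreal (m Q)" "m Q > 0" "m Q \<le> Sr" if QF: "Q \<in> \<F>" for Q
  proof -
    show E: "emeasure lebesgue Q = ennreal (m Q)" unfolding m_def using mpos[OF QF] by simp
    show "m Q > 0" unfolding m_def using mpos[OF QF] by (simp add: enn2real_positive_iff)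
    have "ennreal (m Q) \<le> ennreal Sr" using Sge[OF QF] unfolding E SSr .
    then show "m Q \<le> Sr" using Srpos by simp
  qed
  have SM: "(\<integral>\<^sup>+Q. ennreal (m Q powr s) \<partial>count_space \<F>) \<le> ennreal (Sr powr s)"
  proof -
    have "(\<integral>\<^sup>+Q. ennreal (m Q powr s) \<partial>count_space \<F>)
       \<le> (\<integral>\<^sup>+Q. ennreal (Sr powr (s - 1)) * emeasure lebesgue Q \<partial>count_space \<F>)"
    proof (intro nn_integral_mono)
      fix Q assume "Q \<in> space (count_space \<F>)"
      then have QF: "Q \<in> \<F>" by simp
      have "m Q powr (s - 1) * m Q powr 1 = m Q powr (s - 1 + 1)" by (rule powr_add[symmetric])
      then have "m Q powr s = m Q powr (s - 1) * m Q" using mQ(2)[OF QF] by simp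
      also have "\<dots> \<le> Sr powr (s - 1) * m Q"
        using mQ[OF QF] s1 by (intro mult_right_mono powr_mono2) auto
      finally have "ennreal (m Q powr s) \<le> ennreal (Sr powr (s - 1) * m Q)" by (rule ennreal_leI)
      then show "ennreal (m Q powr s) \<le> ennreal (Sr powr (s - 1)) * emeasure lebesgue Q"
        using mQ[OF QF] by (simp add: ennreal_mult)
    qed
    also have "\<dots> = ennreal (Sr powr (s - 1)) * S"
      unfolding S_def by (rule nn_integral_cmult) simp
    also have "\<dots> = ennreal (Sr powr (s - 1) * Sr)" using SSr Srpos by (simp add: ennreal_mult)
    also have "Sr powr (s - 1) * Sr = Sr powr s"
    proof -
      have "Sr powr (s - 1) * Sr powr 1 = Sr powr (s - 1 + 1)" by (rule powr_add[symmetric])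
      then show ?thesis using Srpos by simp
    qed
    finally show ?thesis .
  qed
  define beta where "beta eps = eps powr (-q/p) * C powr q / q" for eps :: real
  have beta0: "beta eps \<ge> 0" for eps unfolding beta_def using q1 by simp
  define Num where "Num = (\<integral>\<^sup>+ Q. I Q / emeasure lebesgue Q \<partial>count_space \<F>)"
  have key: "Num \<le> ennreal (eps / p * Wr + beta eps * Sr powr s)" if ep: "eps > 0" for eps
  proof -
    have cy: "I Q / emeasure lebesgue Q \<le> ennreal (eps / p) * A Q + ennreal (beta eps) * ennreal (m Q powr s)"
      if QF: "Q \<in> \<F>" for Q
    proof -
      have "I Q / emeasure lebesgue Q \<le> ennreal (eps / p) * A Q + ennreal (beta eps * m Q powr s)"
        unfolding I_def A_def G_def beta_def m_def s_def e_def q_def C_def n_def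
        by (rule cube_young[OF gm cub[OF QF] p ep al])
      then show ?thesis using beta0 by (simp add: ennreal_mult)
    qed
    have "Num \<le> (\<integral>\<^sup>+ Q. ennreal (eps / p) * A Q + ennreal (beta eps) * ennreal (m Q powr s) \<partial>count_space \<F>)"
      unfolding Num_def by (intro nn_integral_mono) (simp add: cy)
    also have "\<dots> = ennreal (eps / p) * (\<integral>\<^sup>+Q. A Q \<partial>count_space \<F>)
        + ennreal (beta eps) * (\<integral>\<^sup>+Q. ennreal (m Q powr s) \<partial>count_space \<F>)"
      by (subst nn_integral_add) (auto simp: nn_integral_cmult)
    also have "\<dots> \<le> ennreal (eps / p) * ennreal Wr + ennreal (beta eps) * ennreal (Sr powr s)"
      by (intro add_mono mult_left_mono SA SM) auto
    also have "\<dots> = ennreal (eps / p * Wr + beta eps * Sr powr s)"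
    proof -
      have "ennreal (eps / p) * ennreal Wr = ennreal (eps / p * Wr)"
        using ep p WWr(2) by (subst ennreal_mult) auto
      moreover have "ennreal (beta eps) * ennreal (Sr powr s) = ennreal (beta eps * Sr powr s)"
        using beta0 by (subst ennreal_mult) auto
      moreover have "eps / p * Wr \<ge> 0" "beta eps * Sr powr s \<ge> 0" using ep p WWr(2) beta0 by auto
      ultimately show ?thesis by (simp add: ennreal_plus)
    qed
    finally show ?thesis .
  qed
  have "Num \<le> ennreal (1 / p * Wr + beta 1 * Sr powr s)" by (rule key) simp
  then have "Num < top" using ennreal_less_top by (rule le_less_trans)
  then have Nfin: "Num \<noteq> \<infinity>" by simp
  define Nr where "Nr = enn2real Num"
  have NNr: "Num = ennreal Nr" unfolding Nr_def using Nfin by (simp add: less_top)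
  define T where "T = C * Sr powr e"
  have T0: "T \<ge> 0" unfolding T_def using C0 by simp
  have "Nr \<le> Wr powr (1/p) * T"
  proof (rule opt_eps[OF p WWr(2) T0])
    fix eps :: real assume ep: "eps > 0"
    have X0: "0 \<le> eps / p * Wr + beta eps * Sr powr s"
      using WWr(2) beta0 p ep Srpos by (intro add_nonneg_nonneg mult_nonneg_nonneg) auto
    have "ennreal Nr \<le> ennreal (eps / p * Wr + beta eps * Sr powr s)" using key[OF ep] unfolding NNr .
    then have "Nr \<le> eps / p * Wr + beta eps * Sr powr s" using X0 by (simp add: ennreal_le_iff)
    also have "beta eps * Sr powr s = eps powr (-(p/(p-1))/p) * T powr (p/(p-1)) / (p/(p-1))"
      unfolding beta_def T_def s_def q_def[symmetric] using C0 Srpos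
      by (simp add: powr_mult powr_powr mult_ac)
    finally show "Nr \<le> eps * Wr / p + eps powr (-(p/(p-1))/p) * T powr (p/(p-1)) / (p/(p-1))"
      by simp
  qed
  then have "Num \<le> ennreal (Sr powr e) * (ennreal C * ennreal (Wr powr (1/p)))"
    unfolding NNr T_def using C0 by (simp add: ennreal_mult[symmetric] mult_ac ennreal_leI)
  then have "Num / ennreal (Sr powr e) \<le> ennreal C * ennreal (Wr powr (1/p))"
    by (intro divide_le_posI_ennreal) (use Srpos in simp)
  then show ?thesis
    unfolding Num_def I_def Sr_def S_def Wr_def C_def .
qed



lemma GaRo_bound:
  fixes g :: "real ^ 'n \<Rightarrow> real"
  assumes gm: "g \<in> borel_measurable lebesgue" and p: "p > 1" and al: "\<alpha> > 0"
    and W: "W_int g \<alpha> p \<noteq> \<infinity>"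
    and de: "dual_exp q = 1 - 1/p + \<alpha>/real CARD('n)"
  shows "GaRo_norm g q \<le> ennreal (real CARD('n) powr ((real CARD('n) + \<alpha> * p) / (2 * p))) * W_norm g \<alpha> p"
proof -
  have Wn: "W_norm g \<alpha> p = ennreal ((enn2real (W_int g \<alpha> p)) powr (1/p))"
    unfolding W_norm_def using W by simp
  show ?thesis
    unfolding GaRo_norm_def de Wn
    by (rule SUP_least) (rule main_bound[OF gm p al W])
qed

lemma cong_f:
  fixes f g :: "real ^ 'n \<Rightarrow> real"
  assumes eq: "\<And>x. x \<in> Q0 \<Longrightarrow> f x = g x"
  shows "W_int f \<alpha> p = W_int g \<alpha> p" "GaRo_norm f q = GaRo_norm g q"
proof -
  show "W_int f \<alpha> p = W_int g \<alpha> p"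
    unfolding W_int_def
    by (intro nn_integral_cong) (auto intro!: nn_integral_cong simp: eq split: split_indicator)
  have I: "(\<integral>\<^sup>+ x \<in> Q. (\<integral>\<^sup>+ y \<in> Q. ennreal \<bar>f x - f y\<bar> \<partial>lebesgue) \<partial>lebesgue)
      = (\<integral>\<^sup>+ x \<in> Q. (\<integral>\<^sup>+ y \<in> Q. ennreal \<bar>g x - g y\<bar> \<partial>lebesgue) \<partial>lebesgue)" if "Q \<subseteq> Q0" for Q
    using that
    by (intro nn_integral_cong) (auto intro!: nn_integral_cong simp: eq subsetD split: split_indicator)
  show "GaRo_norm f q = GaRo_norm g q"
    unfolding GaRo_norm_def
  proof (rule SUP_cong[OF refl])
    fix F :: "(real ^ 'n) set set" assume "F \<in> cube_families"
    then have sub: "\<And>Q. Q \<in> F \<Longrightarrow> Q \<subseteq> Q0" unfolding cube_families_def by auto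
    have "(\<integral>\<^sup>+ Q. ((\<integral>\<^sup>+ x \<in> Q. (\<integral>\<^sup>+ y \<in> Q. ennreal \<bar>f x - f y\<bar> \<partial>lebesgue) \<partial>lebesgue)
                   / emeasure lebesgue Q) \<partial>count_space F)
       = (\<integral>\<^sup>+ Q. ((\<integral>\<^sup>+ x \<in> Q. (\<integral>\<^sup>+ y \<in> Q. ennreal \<bar>g x - g y\<bar> \<partial>lebesgue) \<partial>lebesgue)
                   / emeasure lebesgue Q) \<partial>count_space F)"
      by (rule nn_integral_cong) (subst I, use sub in auto)
    then show "(\<integral>\<^sup>+ Q. ((\<integral>\<^sup>+ x \<in> Q. (\<integral>\<^sup>+ y \<in> Q. ennreal \<bar>f x - f y\<bar> \<partial>lebesgue) \<partial>lebesgue)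
                   / emeasure lebesgue Q) \<partial>count_space F)
      / ennreal ((enn2real (\<integral>\<^sup>+ Q. emeasure lebesgue Q \<partial>count_space F)) powr dual_exp q)
      = (\<integral>\<^sup>+ Q. ((\<integral>\<^sup>+ x \<in> Q. (\<integral>\<^sup>+ y \<in> Q. ennreal \<bar>g x - g y\<bar> \<partial>lebesgue) \<partial>lebesgue)
                   / emeasure lebesgue Q) \<partial>count_space F)
      / ennreal ((enn2real (\<integral>\<^sup>+ Q. emeasure lebesgue Q \<partial>count_space F)) powr dual_exp q)"
      by simp
  qed
qed

theorem theorem4p1:
  fixes f :: "real ^ 'n \<Rightarrow> real" and \<alpha> p :: real
  assumes "0 < \<alpha>" "\<alpha> < 1"
    and "f \<in> borel_measurable (lebesgue_on Q0)"
  shows "(1 < p \<and> p < real CARD('n) / \<alpha> \<and> W_norm f \<alpha> p < \<infinity> \<longrightarrow>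
            GaRo_norm f (ereal (1 / (1 / p - \<alpha> / real CARD('n))))
              \<le> ennreal (real CARD('n) powr ((real CARD('n) + \<alpha> * p) / (2 * p))) * W_norm f \<alpha> p)
       \<and> (W_norm f \<alpha> (real CARD('n) / \<alpha>) < \<infinity> \<longrightarrow>
            GaRo_norm f \<infinity> \<le> ennreal (real CARD('n) powr \<alpha>) * W_norm f \<alpha> (real CARD('n) / \<alpha>))"
proof -
  define g where "g x = (if x \<in> Q0 then f x else 0)" for x
  have gm: "g \<in> borel_measurable lebesgue"
  proof -
    have "(Q0 :: (real ^ 'n) set) \<inter> space lebesgue \<in> sets lebesgue" unfolding Q0_def by simp
    then show ?thesis using assms(3) unfolding g_def by (subst (asm) measurable_restrict_space_iff) auto
  qed
  have eqs: "W_int f \<alpha> r = W_int g \<alpha> r" "GaRo_norm f q = GaRo_norm g q" for r q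
    using cong_f[of f g] unfolding g_def by auto
  have Wn: "W_norm f \<alpha> r = W_norm g \<alpha> r" for r unfolding W_norm_def eqs ..
  let ?n = "real CARD('n)"
  have n1: "?n \<ge> 1" by simp
  have Wfin: "W_int g \<alpha> r \<noteq> \<infinity>" if "W_norm g \<alpha> r < \<infinity>" for r
    using that unfolding W_norm_def by (auto split: if_splits)
  show ?thesis
  proof (intro conjI impI)
    assume h: "1 < p \<and> p < ?n / \<alpha> \<and> W_norm f \<alpha> p < \<infinity>"
    have de: "dual_exp (ereal (1 / (1 / p - \<alpha> / ?n))) = 1 - 1/p + \<alpha>/?n"
      unfolding dual_exp_def by simp
    show "GaRo_norm f (ereal (1 / (1 / p - \<alpha> / ?n))) \<le> ennreal (?n powr ((?n + \<alpha> * p) / (2 * p))) * W_norm f \<alpha> p"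
      unfolding eqs Wn
      by (rule GaRo_bound[OF gm _ assms(1) Wfin de]) (use h Wn in auto)
  next
    assume h: "W_norm f \<alpha> (?n / \<alpha>) < \<infinity>"
    have "\<alpha> < ?n" using assms(2) n1 by linarith
    then have p1: "?n / \<alpha> > 1" using assms(1) by (simp add: field_simps)
    have de: "dual_exp \<infinity> = 1 - 1/(?n / \<alpha>) + \<alpha>/?n"
      unfolding dual_exp_def by simp
    have ex: "(?n + \<alpha> * (?n / \<alpha>)) / (2 * (?n / \<alpha>)) = \<alpha>" using assms(1) n1 by (simp add: field_simps)
    have "GaRo_norm g \<infinity> \<le> ennreal (?n powr ((?n + \<alpha> * (?n / \<alpha>)) / (2 * (?n / \<alpha>)))) * W_norm g \<alpha> (?n / \<alpha>)"
      by (rule GaRo_bound[OF gm p1 assms(1) Wfin de]) (use h Wn in auto)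
    then show "GaRo_norm f \<infinity> \<le> ennreal (?n powr \<alpha>) * W_norm f \<alpha> (?n / \<alpha>)"
      unfolding eqs Wn ex .
  qed
qed


end
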